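(* For real $x>0$, $y>0$ with $xy<2\pi$, $$\sum_{n=0}^{\infty} B_n R_n(y)\,x^n=\frac{e^{y}}{x}\Phi(1,2,x^{-1})-y\,\Phi(e^{-xy},1,x^{-1})-\frac{1}{x}\Phi(e^{-xy},2,x^{-1})+x(y+1-e^{y}).$$
   Context: For an integer $n\ge 0$ and complex $y$, $R_n(y)=e^y-1-\frac{y}{1!}-\frac{y^2}{2!}-\dots-\frac{y^n}{n!}=e^y-\sum_{k=0}^n\frac{y^k}{k!}$. $B_n$ are the Bernoulli numbers, defined by $\frac{z}{e^z-1}=\sum_{n\ge0}B_n\frac{z^n}{n!}$ ($|z|<2\pi$). $\Phi(z,s,a)=\sum_{n=0}^{\infty}\frac{z^n}{(n+a)^s}$ is the Lerch transcendent. *)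

theory Defs
  imports "HOL-Analysis.Analysis" "HOL-Computational_Algebra.Formal_Power_Series"
begin

definition bernoulli :: "nat \<Rightarrow> real" where
  "bernoulli n = of_rat (fps_nth (fps_X / (fps_exp (1::rat) - 1)) n * fact n)"

definition expR :: "nat \<Rightarrow> real \<Rightarrow> real" where
  "expR n y = exp y - (\<Sum>k\<le>n. y ^ k / fact k)"

definition lerch :: "real \<Rightarrow> nat \<Rightarrow> real \<Rightarrow> real" where
  "lerch z s a = (\<Sum>n. z ^ n / (real n + a) ^ s)"

end

theory Submission
  imports Defs "HOL-Complex_Analysis.Complex_Analysis"
begin


lemma bfps_mult:
  "(fps_X / (fps_exp (1::'a::field_char_0) - 1)) * (fps_exp 1 - 1) = fps_X"
proof (rule fps_times_divide_eq)
  have h: "(fps_exp (1::'a) - 1) $ 1 \<noteq> 0" by simp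
  thus "fps_exp (1::'a) - 1 \<noteq> 0" by auto
  from subdegree_leI[OF h] show "subdegree (fps_exp (1::'a) - 1) \<le> subdegree (fps_X :: 'a fps)" by simp
qed

lemma bfps_rec:
  "(fps_X / (fps_exp (1::'a::field_char_0) - 1)) $ n =
     (if n = 0 then 1 else 0) - (\<Sum>i<n. (fps_X / (fps_exp (1::'a) - 1)) $ i / of_nat (fact (Suc n - i)))"
proof -
  define Q where "Q = fps_X / (fps_exp (1::'a) - 1)"
  have QQ: "Q * (fps_exp 1 - 1) = fps_X" unfolding Q_def by (rule bfps_mult)
  have "(Q * (fps_exp 1 - 1)) $ Suc n = (fps_X :: 'a fps) $ Suc n"
    by (subst QQ) simp
  also have "(Q * (fps_exp 1 - 1)) $ Suc n = (\<Sum>i=0..Suc n. Q $ i * (fps_exp 1 - 1) $ (Suc n - i))"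
    by (rule fps_mult_nth)
  also have "\<dots> = (\<Sum>i=0..n. Q $ i * (fps_exp 1 - 1) $ (Suc n - i))"
    by (simp add: sum.atLeast0_atMost_Suc)
  also have "\<dots> = (\<Sum>i\<le>n. Q $ i / of_nat (fact (Suc n - i)))"
    by (intro sum.cong) (auto simp: Suc_diff_le atLeast0AtMost)
  also have "\<dots> = (\<Sum>i<n. Q $ i / of_nat (fact (Suc n - i))) + Q $ n"
    by (simp add: lessThan_Suc_atMost[symmetric])
  finally show ?thesis unfolding Q_def[symmetric] by (auto simp: algebra_simps)
qed

lemma of_rat_fact [simp]: "of_rat (fact n) = (fact n :: 'a::field_char_0)"
  by (metis of_nat_fact of_rat_of_nat_eq)

lemma bfps_of_rat:
  "(fps_X / (fps_exp (1::'a::field_char_0) - 1)) $ n = of_rat ((fps_X / (fps_exp (1::rat) - 1)) $ n)"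
proof (induction n rule: less_induct)
  case (less n)
  show ?case
    apply (subst bfps_rec, subst (2) bfps_rec)
    apply (simp add: of_rat_diff of_rat_sum of_rat_divide less)
    done
qed



definition gc :: "complex \<Rightarrow> complex" where
  "gc z = (if z = 0 then 1 else z / (exp z - 1))"

definition gr :: "real \<Rightarrow> real" where
  "gr u = (if u = 0 then 1 else u / (exp u - 1))"

lemma gc_fps: "gc has_fps_expansion (fps_X / (fps_exp 1 - 1))"
proof -
  have h: "(fps_exp (1::complex) - 1) $ 1 \<noteq> 0" by simp
  hence ne: "fps_exp (1::complex) - 1 \<noteq> 0" by auto
  have sd: "subdegree (fps_exp (1::complex) - 1) = 1"
    using h by (intro subdegreeI) auto
  have "(\<lambda>x. if x = 0 then 1 else x / (exp x - 1)) has_fps_expansion (fps_X / (fps_exp (1::complex) - 1))"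
    by (rule has_fps_expansion_divide[OF has_fps_expansion_fps_X has_fps_expansion_diff[OF has_fps_expansion_exp1 has_fps_expansion_1]])
       (use sd ne in auto)
  thus ?thesis unfolding gc_def[abs_def] .
qed

lemma exp_ne_1_ball:
  fixes z :: complex
  assumes "norm z < 2 * pi" "z \<noteq> 0"
  shows "exp z \<noteq> 1"
proof
  assume "exp z = 1"
  then obtain n :: int where re: "Re z = 0" and im: "Im z = of_int (2 * n) * pi"
    by (auto simp: exp_eq_1)
  have "norm z = \<bar>Im z\<bar>" using re by (simp add: norm_complex_def)
  also have "\<dots> = 2 * pi * \<bar>of_int n\<bar>" using im by (simp add: abs_mult)
  finally have "\<bar>of_int n :: real\<bar> < 1" using assms(1) by simp
  hence "n = 0" by linarith
  hence "z = 0" using re im by (simp add: complex_eq_iff)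
  thus False using assms by simp
qed

lemma of_real_of_rat': "of_real (of_rat q) = (of_rat q :: complex)"
  by (cases q) (simp add: of_rat_rat)

lemma gc_holo: "gc holomorphic_on ball 0 (2 * pi)"
proof -
  have "gc analytic_on ball 0 (2 * pi)"
  proof (subst analytic_on_analytic_at, intro ballI)
    fix z :: complex assume z: "z \<in> ball 0 (2 * pi)"
    show "gc analytic_on {z}"
    proof (cases "z = 0")
      case True
      thus ?thesis using has_fps_expansion_imp_analytic_0[OF gc_fps] by simp
    next
      case False
      have "(\<lambda>w. w / (exp w - 1)) holomorphic_on (ball 0 (2 * pi) - {0})"
        apply (rule holomorphic_on_divide)
          apply (intro holomorphic_intros)
         apply (intro holomorphic_intros)
      proof -
        fix w :: complex assume "w \<in> ball 0 (2 * pi) - {0}"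
        hence "norm w < 2 * pi" "w \<noteq> 0" by auto
        from exp_ne_1_ball[OF this] show "exp w - 1 \<noteq> 0" by simp
      qed
      hence "gc holomorphic_on (ball 0 (2 * pi) - {0})"
        by (rule holomorphic_transform) (simp add: gc_def)
      moreover have "open (ball 0 (2 * pi) - {0::complex})" by (intro open_Diff) auto
      moreover have "z \<in> ball 0 (2 * pi) - {0}" using False z by simp
      ultimately show ?thesis by (rule holomorphic_on_imp_analytic_at)
    qed
  qed
  thus ?thesis by (rule analytic_imp_holomorphic)
qed

lemma bernoulli_eq: "bernoulli n / fact n = of_rat ((fps_X / (fps_exp (1::rat) - 1)) $ n)"
  by (simp add: bernoulli_def of_rat_mult)

lemma bern_sums:
  fixes u :: real
  assumes "\<bar>u\<bar> < 2 * pi"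
  shows "(\<lambda>n. bernoulli n / fact n * u ^ n) sums gr u"
proof -
  have "(\<lambda>n. fps_nth (fps_X / (fps_exp 1 - 1)) n * (of_real u) ^ n) sums gc (of_real u)"
    by (rule has_fps_expansion_imp_sums_complex[OF gc_fps, of "ereal (2*pi)"])
       (use gc_holo assms in auto)
  also have "(\<lambda>n. fps_nth (fps_X / (fps_exp 1 - 1)) n * (of_real u :: complex) ^ n) =
             (\<lambda>n. of_real (bernoulli n / fact n * u ^ n))"
    apply (rule ext)
    apply (subst bfps_of_rat[where 'a=complex])
    apply (simp only: bernoulli_eq of_real_of_rat' of_real_mult of_real_power)
    done
  also have "gc (of_real u) = of_real (gr u)"
    by (simp add: gc_def gr_def exp_of_real)
  finally show ?thesis by (rule iffD1[OF sums_of_real_iff])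
qed



lemma expR_integral:
  assumes "0 \<le> y"
  shows "((\<lambda>t. exp (y - t) * t ^ n / fact n) has_integral expR n y) {0..y}"
proof -
  define F where "F n t = - exp (y - t) * (\<Sum>k\<le>n. t ^ k / fact k)" for n t
  have d: "(F n has_real_derivative exp (y - t) * t ^ n / fact n) (at t)" for n t
  proof (induction n)
    case 0
    show ?case unfolding F_def by (auto intro!: derivative_eq_intros)
  next
    case (Suc n)
    have e: "F (Suc n) = (\<lambda>t. F n t - exp (y - t) * (t ^ Suc n / fact (Suc n)))"
      by (auto simp: F_def algebra_simps)
    have p0: "((\<lambda>t. t ^ Suc n / fact (Suc n)) has_real_derivative (real (Suc n) * t ^ n) / fact (Suc n)) (at t)"
      using DERIV_cdivide[OF DERIV_pow[of "Suc n" t], of "fact (Suc n)"] by simp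
    have p: "((\<lambda>t. t ^ Suc n / fact (Suc n)) has_real_derivative t ^ n / fact n) (at t)"
      using p0 by (simp add: fact_Suc del: of_nat_Suc)
    have q: "((\<lambda>t. exp (y - t)) has_real_derivative - exp (y - t)) (at t)"
      by (auto intro!: derivative_eq_intros)
    have "((\<lambda>t. F n t - exp (y - t) * (t ^ Suc n / fact (Suc n))) has_real_derivative
       exp (y - t) * t ^ n / fact n - (- exp (y - t) * (t ^ Suc n / fact (Suc n)) + t ^ n / fact n * exp (y - t))) (at t)"
      by (intro DERIV_diff Suc.IH DERIV_mult q p)
    thus ?case unfolding e by (simp add: algebra_simps)
  qed
  have z: "(\<Sum>k\<le>n. (0::real) ^ k / fact k) = 1" by (induction n) auto
  have "((\<lambda>t. exp (y - t) * t ^ n / fact n) has_integral (F n y - F n 0)) {0..y}"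
    by (intro fundamental_theorem_of_calculus assms)
       (auto simp: has_real_derivative_iff_has_vector_derivative[symmetric] intro: has_field_derivative_at_within d)
  also have "F n y - F n 0 = expR n y"
    using z by (simp add: F_def expR_def)
  finally show ?thesis .
qed

lemma lhs_integral:
  fixes x y :: real
  assumes x: "x > 0" and y: "y > 0" and xy: "x * y < 2 * pi"
  shows "((\<lambda>t. exp (y - t) * gr (x * t)) has_integral (\<Sum>n. bernoulli n * expR n y * x ^ n)) {0..y}
         \<and> summable (\<lambda>n. bernoulli n * expR n y * x ^ n)"
proof -
  define c where "c n = bernoulli n / fact n" for n
  define f where "f n t = exp (y - t) * (c n * (x * t) ^ n)" for n t
  define r where "r = (x * y + 2 * pi) / 2"
  have r: "x * y < r" "r < 2 * pi" "0 < x * y" using xy x y by (auto simp: r_def)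
  have "summable (\<lambda>n. c n * r ^ n)"
    using bern_sums[of r] r unfolding c_def by (auto simp: sums_iff)
  from powser_insidea[OF this, of "x * y"] r
  have sumxy: "summable (\<lambda>n. norm (c n * (x * y) ^ n))" by simp
  define M where "M n = exp y * norm (c n * (x * y) ^ n)" for n
  have sumM: "summable M" unfolding M_def by (intro summable_mult sumxy)
  have bound: "norm (f n t) \<le> M n" if t: "t \<in> {0..y}" for n t
  proof -
    have "norm (f n t) = exp (y - t) * (\<bar>c n\<bar> * (x * t) ^ n)"
      using t x by (simp add: f_def abs_mult power_abs)
    also have "\<dots> \<le> exp y * (\<bar>c n\<bar> * (x * y) ^ n)"
      using t x by (intro mult_mono power_mono mult_left_mono) auto
    also have "\<dots> = M n" using x y by (simp add: M_def abs_mult power_abs)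
    finally show ?thesis .
  qed
  have U: "uniform_limit {0..y} (\<lambda>N t. \<Sum>i<N. f i t) (\<lambda>t. suminf (\<lambda>i. f i t)) sequentially"
    by (rule Weierstrass_m_test[OF bound sumM])
  have cont: "continuous_on {0..y} (\<lambda>t. \<Sum>i<N. f i t)" for N
    unfolding f_def by (intro continuous_intros)
  obtain I J where I: "\<And>N. ((\<lambda>t. \<Sum>i<N. f i t) has_integral I N) {0..y}"
    and J: "((\<lambda>t. suminf (\<lambda>i. f i t)) has_integral J) {0..y}"
    and IJ: "I \<longlonglongrightarrow> J"
    by (rule uniform_limit_integral[OF U cont]) auto
  have fi: "(f i has_integral (bernoulli i * expR i y * x ^ i)) {0..y}" for i
  proof -
    have "((\<lambda>t. (bernoulli i * x ^ i) * (exp (y - t) * t ^ i / fact i)) has_integral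
            (bernoulli i * x ^ i) * expR i y) {0..y}"
      by (intro has_integral_mult_right expR_integral) (use y in auto)
    moreover have "(\<lambda>t. (bernoulli i * x ^ i) * (exp (y - t) * t ^ i / fact i)) = f i"
      by (auto simp: f_def c_def power_mult_distrib fun_eq_iff)
    ultimately show ?thesis by (simp add: algebra_simps)
  qed
  have "I N = (\<Sum>i<N. bernoulli i * expR i y * x ^ i)" for N
    by (rule has_integral_unique[OF I has_integral_sum]) (auto intro: fi)
  hence "I = (\<lambda>N. \<Sum>i<N. bernoulli i * expR i y * x ^ i)" by (intro ext)
  with IJ have S: "(\<lambda>n. bernoulli n * expR n y * x ^ n) sums J"
    by (simp add: sums_def)
  have sf: "suminf (\<lambda>i. f i t) = exp (y - t) * gr (x * t)" if t: "t \<in> {0..y}" for t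
  proof -
    have "x * t \<le> x * y" using t x by (intro mult_left_mono) auto
    moreover have "0 \<le> x * t" using t x by simp
    ultimately have "\<bar>x * t\<bar> < 2 * pi" using r by linarith
    from bern_sums[OF this] have "(\<lambda>n. c n * (x * t) ^ n) sums gr (x * t)" by (simp add: c_def)
    from sums_mult[OF this, of "exp (y - t)"] show ?thesis
      by (simp add: f_def sums_iff)
  qed
  have "((\<lambda>t. suminf (\<lambda>i. f i t)) has_integral J) {0..y} = ((\<lambda>t. exp (y - t) * gr (x * t)) has_integral J) {0..y}"
    by (rule has_integral_cong) (rule sf)
  with J have "((\<lambda>t. exp (y - t) * gr (x * t)) has_integral J) {0..y}" by simp
  with S show ?thesis by (simp add: sums_iff)
qed



lemma tel: "(exp u - 1) * (\<Sum>k\<in>{1..K}. exp (-(real k * u))) = 1 - exp (-(real K * u))"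
proof (induction K)
  case 0 then show ?case by simp
next
  case (Suc K)
  have e: "exp u * exp (-(real (Suc K) * u)) = exp (-(real K * u))"
    by (simp add: exp_add[symmetric] algebra_simps)
  have "(exp u - 1) * (\<Sum>k\<in>{1..Suc K}. exp (-(real k * u))) =
        (exp u - 1) * (\<Sum>k\<in>{1..K}. exp (-(real k * u))) + (exp u - 1) * exp (-(real (Suc K) * u))"
    by (simp add: algebra_simps)
  also have "\<dots> = 1 - exp (-(real (Suc K) * u))"
    using Suc e by (simp add: algebra_simps)
  finally show ?case .
qed

lemma gr_identity:
  "gr u = u * (\<Sum>k\<in>{1..K}. exp (-(real k * u))) + gr u * exp (-(real K * u))"
proof (cases "u = 0")
  case True then show ?thesis by (simp add: gr_def)
next
  case False
  have ne: "exp u - 1 \<noteq> 0" using False by simp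
  define S where "S = (\<Sum>k\<in>{1..K}. exp (-(real k * u)))"
  have "u * (1 - exp (-(real K * u))) = u * ((exp u - 1) * S)"
    using tel[of u K] by (simp add: S_def)
  hence "u * S = u * (1 - exp (-(real K * u))) / (exp u - 1)"
    using ne by (simp add: field_simps)
  hence "u * (\<Sum>k\<in>{1..K}. exp (-(real k * u))) = u * (1 - exp (-(real K * u))) / (exp u - 1)"
    by (simp add: S_def)
  thus ?thesis using False ne by (simp add: gr_def field_simps)
qed

lemma gr_bounds: assumes "u \<ge> 0" shows "0 \<le> gr u" "gr u \<le> 1"
proof -
  have "u \<le> exp u - 1" using exp_ge_add_one_self[of u] by linarith
  thus "0 \<le> gr u" "gr u \<le> 1" using assms by (auto simp: gr_def)
qed

lemma texp_integral:
  fixes b y :: real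
  assumes "b > 0" "y \<ge> 0"
  shows "((\<lambda>t. t * exp (-(b * t))) has_integral (1 / b^2 - (y / b + 1 / b^2) * exp (-(b * y)))) {0..y}"
proof -
  define P where "P t = -(t / b + 1 / b^2) * exp (-(b * t))" for t
  have d: "(P has_real_derivative t * exp (-(b * t))) (at t)" for t
  proof -
    have "(P has_real_derivative (-(1 / b) * exp (-(b * t)) + (-(t / b + 1 / b^2)) * (exp (-(b * t)) * (- b)))) (at t)"
      unfolding P_def using assms by (auto intro!: derivative_eq_intros)
    moreover have "b \<noteq> 0" using assms by simp
    ultimately show ?thesis by (simp add: field_simps power2_eq_square)
  qed
  have "((\<lambda>t. t * exp (-(b * t))) has_integral (P y - P 0)) {0..y}"
    by (intro fundamental_theorem_of_calculus assms)
       (auto simp: has_real_derivative_iff_has_vector_derivative[symmetric] intro: has_field_derivative_at_within d)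
  moreover have "P y - P 0 = 1 / b^2 - (y / b + 1 / b^2) * exp (-(b * y))"
    by (simp add: P_def algebra_simps)
  ultimately show ?thesis by simp
qed

lemma expneg_integral:
  fixes c y :: real
  assumes "c > 0" "y \<ge> 0"
  shows "((\<lambda>t. exp (-(c * t))) has_integral ((1 - exp (-(c * y))) / c)) {0..y}"
proof -
  define P where "P t = - exp (-(c * t)) / c" for t
  have d: "(P has_real_derivative exp (-(c * t))) (at t)" for t
  proof -
    have "(P has_real_derivative (- (exp (-(c * t)) * (- c)) / c)) (at t)"
      unfolding P_def by (auto intro!: derivative_eq_intros)
    thus ?thesis using assms by simp
  qed
  have "((\<lambda>t. exp (-(c * t))) has_integral (P y - P 0)) {0..y}"
    by (intro fundamental_theorem_of_calculus assms)
       (auto simp: has_real_derivative_iff_has_vector_derivative[symmetric] intro: has_field_derivative_at_within d)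
  thus ?thesis by (simp add: P_def diff_divide_distrib)
qed

definition Ik :: "real \<Rightarrow> real \<Rightarrow> nat \<Rightarrow> real" where
  "Ik x y k = x * exp y * (1 / (1 + real k * x)^2 - (y / (1 + real k * x) + 1 / (1 + real k * x)^2) * exp (-((1 + real k * x) * y)))"

lemma hk_integral:
  assumes x: "x > 0" and y: "y > 0"
  shows "((\<lambda>t. exp (y - t) * (x * t * exp (-(real k * (x * t))))) has_integral Ik x y k) {0..y}"
proof -
  have b: "1 + real k * x > 0" using x by (simp add: add_pos_nonneg)
  have "((\<lambda>t. (x * exp y) * (t * exp (-((1 + real k * x) * t)))) has_integral (x * exp y) *
          (1 / (1 + real k * x)^2 - (y / (1 + real k * x) + 1 / (1 + real k * x)^2) * exp (-((1 + real k * x) * y)))) {0..y}"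
    by (intro has_integral_mult_right texp_integral b) (use y in simp)
  moreover have "(\<lambda>t. (x * exp y) * (t * exp (-((1 + real k * x) * t)))) = (\<lambda>t. exp (y - t) * (x * t * exp (-(real k * (x * t)))))"
  proof
    fix t
    have "exp (y - t) * exp (-(real k * (x * t))) = exp y * exp (-((1 + real k * x) * t))"
      by (simp add: mult_exp_exp algebra_simps)
    thus "(x * exp y) * (t * exp (-((1 + real k * x) * t))) = exp (y - t) * (x * t * exp (-(real k * (x * t))))"
      by (metis (no_types, lifting) mult.assoc mult.left_commute)
  qed
  ultimately show ?thesis by (simp add: Ik_def)
qed

lemma series_J:
  assumes x: "x > 0" and y: "y > 0"
    and J: "((\<lambda>t. exp (y - t) * gr (x * t)) has_integral J) {0..y}"
  shows "(\<lambda>k. Ik x y (Suc k)) sums J"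
proof -
  define h where "h k t = exp (y - t) * (x * t * exp (-(real k * (x * t))))" for k t
  define \<rho> where "\<rho> K t = exp (y - t) * gr (x * t) * exp (-(real K * (x * t)))" for K t
  have bnd: "\<bar>(\<Sum>k\<in>{1..K}. Ik x y k) - J\<bar> \<le> (exp y / x) / real K" if K: "K \<ge> 1" for K
  proof -
    have eq: "\<rho> K t = exp (y - t) * gr (x * t) - (\<Sum>k\<in>{1..K}. h k t)" for t
    proof -
      have "exp (y - t) * gr (x * t) = exp (y - t) * ((x * t) * (\<Sum>k\<in>{1..K}. exp (-(real k * (x * t))))) + \<rho> K t"
        by (subst gr_identity[of "x * t" K]) (simp add: \<rho>_def algebra_simps)
      also have "exp (y - t) * ((x * t) * (\<Sum>k\<in>{1..K}. exp (-(real k * (x * t))))) = (\<Sum>k\<in>{1..K}. h k t)"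
        by (simp add: h_def sum_distrib_left)
      finally show ?thesis by simp
    qed
    have ri: "(\<rho> K has_integral (J - (\<Sum>k\<in>{1..K}. Ik x y k))) {0..y}"
    proof -
      have "((\<lambda>t. exp (y - t) * gr (x * t) - (\<Sum>k\<in>{1..K}. h k t)) has_integral (J - (\<Sum>k\<in>{1..K}. Ik x y k))) {0..y}"
        by (intro has_integral_diff J has_integral_sum) (auto simp: h_def intro: hk_integral x y)
      moreover have "\<rho> K = (\<lambda>t. exp (y - t) * gr (x * t) - (\<Sum>k\<in>{1..K}. h k t))"
        by (rule ext) (rule eq)
      ultimately show ?thesis by simp
    qed
    have c: "real K * x > 0" using K x by simp
    have ei: "((\<lambda>t. exp y * exp (-((real K * x) * t))) has_integral exp y * ((1 - exp (-((real K * x) * y))) / (real K * x))) {0..y}"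
      by (intro has_integral_mult_right expneg_integral c) (use y in simp)
    have pt: "0 \<le> \<rho> K t \<and> \<rho> K t \<le> exp y * exp (-((real K * x) * t))" if t: "t \<in> {0..y}" for t
    proof -
      have xt: "x * t \<ge> 0" using t x by simp
      have "exp (y - t) \<le> exp y" using t by simp
      moreover have "gr (x * t) \<le> 1" "0 \<le> gr (x * t)" using gr_bounds[OF xt] by auto
      ultimately have "exp (y - t) * gr (x * t) \<le> exp y * 1"
        by (intro mult_mono) auto
      hence "exp (y - t) * gr (x * t) * exp (-(real K * (x * t))) \<le> exp y * exp (-(real K * (x * t)))"
        by (intro mult_right_mono) auto
      moreover have "0 \<le> exp (y - t) * gr (x * t) * exp (-(real K * (x * t)))"
        using \<open>0 \<le> gr (x * t)\<close> by simp
      ultimately show ?thesis by (simp add: \<rho>_def mult.assoc)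
    qed
    have lo: "0 \<le> J - (\<Sum>k\<in>{1..K}. Ik x y k)"
      by (rule has_integral_nonneg[OF ri]) (use pt in blast)
    have hi: "J - (\<Sum>k\<in>{1..K}. Ik x y k) \<le> exp y * ((1 - exp (-((real K * x) * y))) / (real K * x))"
      by (rule has_integral_le[OF ri ei]) (use pt in blast)
    also have "\<dots> \<le> exp y * (1 / (real K * x))"
      using c by (intro mult_left_mono divide_right_mono) auto
    also have "\<dots> = (exp y / x) / real K" by simp
    finally show ?thesis using lo by simp
  qed
  have "(\<lambda>n. (\<Sum>k\<in>{1..n}. Ik x y k) - J) \<longlonglongrightarrow> 0"
  proof (rule Lim_null_comparison)
    show "\<forall>\<^sub>F n in sequentially. norm ((\<Sum>k\<in>{1..n}. Ik x y k) - J) \<le> (exp y / x) / real n"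
      using eventually_ge_at_top[of "1::nat"] by eventually_elim (use bnd in auto)
    show "(\<lambda>n. (exp y / x) / real n) \<longlonglongrightarrow> 0" by (rule lim_const_over_n)
  qed
  hence "(\<lambda>n. (\<Sum>k\<in>{1..n}. Ik x y k)) \<longlonglongrightarrow> J" by (simp add: Lim_null[symmetric])
  thus ?thesis unfolding sums_def by (simp add: sum_bounds_lt_plus1)
qed



lemma lerch_sums1:
  assumes a: "a > 0"
  shows "(\<lambda>n. (1::real) ^ n / (real n + a) ^ 2) sums lerch 1 2 a"
proof -
  have "summable (\<lambda>n. (1::real) ^ n / (real n + a) ^ 2)"
  proof (rule summable_comparison_test)
    show "\<exists>N. \<forall>n\<ge>N. norm ((1::real) ^ n / (real n + a) ^ 2) \<le> inverse (real n ^ 2)"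
    proof (intro exI allI impI)
      fix n :: nat assume "n \<ge> 1"
      hence "real n ^ 2 \<le> (real n + a) ^ 2" "0 < real n ^ 2" using a by (auto intro: power_mono)
      thus "norm ((1::real) ^ n / (real n + a) ^ 2) \<le> inverse (real n ^ 2)"
        using a by (simp add: divide_simps)
    qed
    show "summable (\<lambda>n. inverse (real n ^ 2))"
      using inverse_power_summable[of 2, where 'a=real] by simp
  qed
  thus ?thesis unfolding lerch_def by (simp add: summable_sums)
qed

lemma lerch_sums2:
  assumes a: "a > 0" and z: "0 < z" "z < 1"
  shows "(\<lambda>n. z ^ n / (real n + a) ^ s) sums lerch z s a"
proof -
  have "summable (\<lambda>n. z ^ n / (real n + a) ^ s)"
  proof (rule summable_comparison_test)
    show "\<exists>N. \<forall>n\<ge>N. norm (z ^ n / (real n + a) ^ s) \<le> z ^ n * (1 / a ^ s)"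
    proof (intro exI allI impI)
      fix n :: nat
      have "a ^ s \<le> (real n + a) ^ s" using a by (intro power_mono) auto
      thus "norm (z ^ n / (real n + a) ^ s) \<le> z ^ n * (1 / a ^ s)"
        using a z by (simp add: divide_simps mult_left_mono)
    qed
    show "summable (\<lambda>n. z ^ n * (1 / a ^ s))"
      using z by (intro summable_mult2 summable_geometric) simp
  qed
  thus ?thesis unfolding lerch_def by (simp add: summable_sums)
qed

theorem mainTheorem5:
  fixes x y :: real
  assumes "x > 0" and "y > 0" and "x * y < 2 * pi"
  shows "(\<lambda>n. bernoulli n * expR n y * x ^ n) sums
           (exp y / x * lerch 1 2 (1 / x) - y * lerch (exp (- x * y)) 1 (1 / x)
            - 1 / x * lerch (exp (- x * y)) 2 (1 / x) + x * (y + 1 - exp y))"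
proof -
  note x = assms(1) and y = assms(2)
  define L where "L = (\<Sum>n. bernoulli n * expR n y * x ^ n)"
  from lhs_integral[OF assms] have GJ: "((\<lambda>t. exp (y - t) * gr (x * t)) has_integral L) {0..y}"
    and sL: "summable (\<lambda>n. bernoulli n * expR n y * x ^ n)" by (auto simp: L_def)
  from series_J[OF x y GJ] have s1: "(\<lambda>k. Ik x y (Suc k)) sums L" .
  define z where "z = exp (- x * y)"
  have z: "0 < z" "z < 1" using x y by (auto simp: z_def)
  have a: "1 / x > 0" using x by simp
  define R0 where "R0 = exp y / x * lerch 1 2 (1 / x) - y * lerch z 1 (1 / x) - 1 / x * lerch z 2 (1 / x)"
  have sT: "(\<lambda>k. exp y / x * ((1::real) ^ k / (real k + 1 / x) ^ 2) - y * (z ^ k / (real k + 1 / x) ^ 1)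
              - 1 / x * (z ^ k / (real k + 1 / x) ^ 2)) sums R0"
    unfolding R0_def
    by (intro sums_diff sums_mult lerch_sums1 lerch_sums2 a z)
  have TI: "exp y / x * ((1::real) ^ k / (real k + 1 / x) ^ 2) - y * (z ^ k / (real k + 1 / x) ^ 1)
              - 1 / x * (z ^ k / (real k + 1 / x) ^ 2) = Ik x y k" for k
  proof -
    define b where "b = 1 + real k * x"
    have b: "b > 0" using x by (simp add: b_def add_pos_nonneg)
    have kx: "real k + 1 / x = b / x" using x by (simp add: b_def field_simps)
    have e: "exp y * exp (-((1 + real k * x) * y)) = z ^ k"
      unfolding z_def by (simp add: mult_exp_exp exp_of_nat_mult[symmetric] algebra_simps)
    have "Ik x y k = x * exp y / b^2 - x * (y / b + 1 / b^2) * (exp y * exp (-((1 + real k * x) * y)))"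
      by (simp add: Ik_def b_def algebra_simps)
    also have "\<dots> = x * exp y / b^2 - x * (y / b + 1 / b^2) * z ^ k" by (simp only: e)
    finally have I: "Ik x y k = x * exp y / b^2 - x * (y / b + 1 / b^2) * z ^ k" .
    show ?thesis unfolding I kx using x b by (simp add: field_simps power2_eq_square)
  qed
  have "(\<lambda>k. exp y / x * ((1::real) ^ k / (real k + 1 / x) ^ 2) - y * (z ^ k / (real k + 1 / x) ^ 1)
              - 1 / x * (z ^ k / (real k + 1 / x) ^ 2)) = Ik x y" by (rule ext) (rule TI)
  with sT have sI: "Ik x y sums R0" by simp
  from s1 have "Ik x y sums (L + Ik x y 0)" by (simp add: sums_Suc_iff)
  with sI have "R0 = L + Ik x y 0" by (rule sums_unique2)
  moreover have "Ik x y 0 = x * exp y - x * y - x"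
    by (simp add: Ik_def algebra_simps exp_minus_inverse)
  ultimately have LR: "L = R0 + x * (y + 1 - exp y)" by (simp add: algebra_simps)
  have "(\<lambda>n. bernoulli n * expR n y * x ^ n) sums L"
    unfolding L_def by (rule summable_sums[OF sL])
  hence "(\<lambda>n. bernoulli n * expR n y * x ^ n) sums (R0 + x * (y + 1 - exp y))"
    by (simp only: LR)
  thus ?thesis by (simp only: R0_def z_def)
qed

end
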